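(* Let $\rho=(r,U)$ be a universally quantified rule, let $(\pi\colon L\to\overline L,\gamma\colon\overline L\rightharpoonup\overline R)$ be an instantiation of $\rho$, let $u\in U$ and let $(\pi,\gamma)\oplus u=(p_u'\circ\pi,\eta)$ with $\eta\colon\overline L_u\rightharpoonup\overline R_u$. Then there exist subgraph morphisms $\mu_u'\colon\overline L_u\rightharpoonup\overline L$ and $\mu_u''\colon\overline R_u\rightharpoonup\overline R$ such that $\gamma\circ\mu_u'=\mu_u''\circ\eta$.
   Context: Fix a finite label set $\Lambda$ with arity function $\mathrm{ar}\colon\Lambda\to\mathbb N$. A (hyper)graph $G=(V_G,E_G,c_G,l_G)$ consists of finite sets $V_G$ (nodes) and $E_G$ (edges), a connection function $c_G\colon E_G\to V_G^*$ and a labelling $l_G\colon E_G\to\Lambda$ with $|c_G(e)|=\mathrm{ar}(l_G(e))$; an edge $e$ is incident to a node $v$ if $v$ occurs in $c_G(e)$. A morphism $\phi\colon G\rightharpoonup G'$ is a pair of partial functions $\phi_V,\phi_E$ such that whenever $\phi_E(e)$ is defined, $\phi_V$ is defined on all nodes incident to $e$, $l_{G'}(\phi_E(e))=l_G(e)$ and $\phi_V(c_G(e))=c_{G'}(\phi_E(e))$. "Total" means defined everywhere. Pushouts are taken in the category of graphs and partial morphisms (always exist, unique up to isomorphism; concretely: quotient of $G_1\sqcup G_2$ by the smallest equivalence identifying $\phi(x)$ and $\psi(x)$ for $x\in G_0$, dropping classes containing the image of an $x\in G_0$ on which $\phi$ or $\psi$ is undefined and edge classes incident to dropped node classes). A subgraph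 morphism is a morphism that is injective and surjective (as partial functions on nodes and edges). A universally quantified rule is $\rho=(r,U)$ with $r\colon L\rightharpoonup R$ and $U$ a finite set of pairs $u=(p_u,q_u)$, $p_u\colon L\to L_u$ total injective, $q_u\colon L_u\rightharpoonup R_u$, such that for every $x\in L$, $q_u(p_u(x))$ is defined and has exactly one preimage under $q_u$; $Q(u)$ is the set of $v\in V_L$ such that some edge incident to $p_u(v)$ has no preimage under $p_u$, required nonempty. Instantiations $(\pi\colon L\to\overline L$ total injective, $\gamma\colon\overline L\rightharpoonup\overline R)$ are defined recursively: $(\mathrm{id}_L,r)$ is one (length 0); if $(\pi,\gamma)$ is one of length $n$ and $u\in U$, let $\overline L_u$ with $p_u'\colon\overline L\to\overline L_u$, $\pi'\colon L_u\to\overline L_u$ be the pushout of $\pi,p_u$, let $\overline R_u$ with $\alpha\colon\overline R\rightharpoonup\overline R_u$, $\beta\colon R_u\rightharpoonup\overline R_u$ be the pushout of $\gamma\circ\pi$ and $q_u\circ p_u$, and $\eta\colon\overline L_u\rightharpoonup\overline R_u$ the unique morphism with $\eta\circ p_u'=\alpha\circ\gamma$, $\eta\circ\pi'=\beta\circ q_u$; then $(\pi,\gamma)\oplus u:=(p_u'\circ\pi,\eta)$ is an instantiation of length $n+1$. *)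

theory Defs
  imports Main
begin

text \<open>Hypergraphs over a finite label type 'l with arity function ar.
  Nodes and edges are drawn from nat (every finite graph is isomorphic to one of these).\<close>

record 'l hgraph =
  gV :: "nat set"
  gE :: "nat set"
  gc :: "nat \<Rightarrow> nat list"
  gl :: "nat \<Rightarrow> 'l"

definition is_graph :: "('l::finite \<Rightarrow> nat) \<Rightarrow> 'l hgraph \<Rightarrow> bool" where
  "is_graph ar G \<longleftrightarrow> finite (gV G) \<and> finite (gE G) \<and>
     (\<forall>e\<in>gE G. set (gc G e) \<subseteq> gV G \<and> length (gc G e) = ar (gl G e))"

record morph =
  mV :: "nat \<rightharpoonup> nat"
  mE :: "nat \<rightharpoonup> nat"

definition is_morph :: "'l hgraph \<Rightarrow> 'l hgraph \<Rightarrow> morph \<Rightarrow> bool" where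
  "is_morph G G' f \<longleftrightarrow>
     dom (mV f) \<subseteq> gV G \<and> dom (mE f) \<subseteq> gE G \<and>
     (\<forall>v y. mV f v = Some y \<longrightarrow> y \<in> gV G') \<and>
     (\<forall>e e'. mE f e = Some e' \<longrightarrow>
        e' \<in> gE G' \<and> set (gc G e) \<subseteq> dom (mV f) \<and> gl G' e' = gl G e \<and>
        map (\<lambda>v. the (mV f v)) (gc G e) = gc G' e')"

definition mcomp :: "morph \<Rightarrow> morph \<Rightarrow> morph" (infixl "\<circ>\<^sub>m" 55) where
  "g \<circ>\<^sub>m f = \<lparr>mV = mV g \<circ>\<^sub>m mV f, mE = mE g \<circ>\<^sub>m mE f\<rparr>"

definition mid :: "'l hgraph \<Rightarrow> morph" where
  "mid G = \<lparr>mV = (\<lambda>v. if v \<in> gV G then Some v else None),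
            mE = (\<lambda>e. if e \<in> gE G then Some e else None)\<rparr>"

definition is_total :: "'l hgraph \<Rightarrow> morph \<Rightarrow> bool" where
  "is_total G f \<longleftrightarrow> dom (mV f) = gV G \<and> dom (mE f) = gE G"

definition is_injective :: "morph \<Rightarrow> bool" where
  "is_injective f \<longleftrightarrow> inj_on (mV f) (dom (mV f)) \<and> inj_on (mE f) (dom (mE f))"

definition is_surjective :: "'l hgraph \<Rightarrow> morph \<Rightarrow> bool" where
  "is_surjective G' f \<longleftrightarrow> ran (mV f) = gV G' \<and> ran (mE f) = gE G'"

definition subgraph_morph :: "'l hgraph \<Rightarrow> 'l hgraph \<Rightarrow> morph \<Rightarrow> bool" where
  "subgraph_morph G G' f \<longleftrightarrow> is_morph G G' f \<and> is_injective f \<and> is_surjective G' f"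

definition is_pushout ::
  "('l::finite \<Rightarrow> nat) \<Rightarrow> 'l hgraph \<Rightarrow> 'l hgraph \<Rightarrow> 'l hgraph \<Rightarrow> morph \<Rightarrow> morph \<Rightarrow>
   'l hgraph \<Rightarrow> morph \<Rightarrow> morph \<Rightarrow> bool" where
  "is_pushout ar G0 G1 G2 phi psi G3 phi' psi' \<longleftrightarrow>
     is_graph ar G3 \<and> is_morph G1 G3 phi' \<and> is_morph G2 G3 psi' \<and>
     phi' \<circ>\<^sub>m phi = psi' \<circ>\<^sub>m psi \<and>
     (\<forall>H a b. is_graph ar H \<and> is_morph G1 H a \<and> is_morph G2 H b \<and> a \<circ>\<^sub>m phi = b \<circ>\<^sub>m psi \<longrightarrow>
        (\<exists>!h. is_morph G3 H h \<and> h \<circ>\<^sub>m phi' = a \<and> h \<circ>\<^sub>m psi' = b))"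

text \<open>A universally quantified rule: (L, R, r, U); each u in U is (L_u, p_u, R_u, q_u).\<close>
type_synonym 'l urule =
  "'l hgraph \<times> 'l hgraph \<times> morph \<times> ('l hgraph \<times> morph \<times> 'l hgraph \<times> morph) set"

definition Qset :: "'l hgraph \<Rightarrow> 'l hgraph \<Rightarrow> morph \<Rightarrow> nat set" where
  "Qset L Lu p = {v \<in> gV L. \<exists>e\<in>gE Lu. e \<notin> ran (mE p) \<and>
        (\<exists>v'. mV p v = Some v' \<and> v' \<in> set (gc Lu e))}"

definition is_urule :: "('l::finite \<Rightarrow> nat) \<Rightarrow> 'l urule \<Rightarrow> bool" where
  "is_urule ar \<rho> \<longleftrightarrow> (case \<rho> of (L, R, r, U) \<Rightarrow>
     is_graph ar L \<and> is_graph ar R \<and> is_morph L R r \<and> finite U \<and>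
     (\<forall>(Lu, p, Ru, q) \<in> U.
        is_graph ar Lu \<and> is_graph ar Ru \<and>
        is_morph L Lu p \<and> is_total L p \<and> is_injective p \<and> is_morph Lu Ru q \<and>
        (\<forall>x\<in>gV L. \<forall>x'. mV p x = Some x' \<longrightarrow>
            (\<exists>y. mV q x' = Some y \<and> (\<forall>z. mV q z = Some y \<longrightarrow> z = x'))) \<and>
        (\<forall>x\<in>gE L. \<forall>x'. mE p x = Some x' \<longrightarrow>
            (\<exists>y. mE q x' = Some y \<and> (\<forall>z. mE q z = Some y \<longrightarrow> z = x'))) \<and>
        Qset L Lu p \<noteq> {}))"

text \<open>One extension step (\<pi>,\<gamma>) \<oplus> u, with arbitrary choice of the two pushouts:
  (Lb, pi, Rb, gamma) \<oplus> (Lu, p, Ru, q) yields (Lbu, p' \<circ> pi, Rbu, eta).\<close>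
definition oplus_step ::
  "('l::finite \<Rightarrow> nat) \<Rightarrow> 'l hgraph \<Rightarrow>
   ('l hgraph \<times> morph \<times> 'l hgraph \<times> morph) \<Rightarrow>
   ('l hgraph \<times> morph \<times> 'l hgraph \<times> morph) \<Rightarrow>
   ('l hgraph \<times> morph \<times> 'l hgraph \<times> morph) \<Rightarrow> bool" where
  "oplus_step ar L inst u res \<longleftrightarrow>
    (case inst of (Lb, pi, Rb, gamma) \<Rightarrow> case u of (Lu, p, Ru, q) \<Rightarrow>
     case res of (Lbu, pinew, Rbu, eta) \<Rightarrow>
     (\<exists>p' pi' alpha beta.
        is_pushout ar L Lb Lu pi p Lbu p' pi' \<and>
        is_pushout ar L Rb Ru (gamma \<circ>\<^sub>m pi) (q \<circ>\<^sub>m p) Rbu alpha beta \<and>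
        is_morph Lbu Rbu eta \<and>
        eta \<circ>\<^sub>m p' = alpha \<circ>\<^sub>m gamma \<and> eta \<circ>\<^sub>m pi' = beta \<circ>\<^sub>m q \<and>
        pinew = p' \<circ>\<^sub>m pi))"

inductive_set instantiations ::
  "('l::finite \<Rightarrow> nat) \<Rightarrow> 'l urule \<Rightarrow> ('l hgraph \<times> morph \<times> 'l hgraph \<times> morph) set"
  for ar :: "'l::finite \<Rightarrow> nat" and \<rho> :: "'l urule" where
  base: "\<rho> = (L, R, r, U) \<Longrightarrow> (L, mid L, R, r) \<in> instantiations ar \<rho>"
| step: "\<rho> = (L, R, r, U) \<Longrightarrow> i \<in> instantiations ar \<rho> \<Longrightarrow> u \<in> U \<Longrightarrow>
         oplus_step ar L i u res \<Longrightarrow> res \<in> instantiations ar \<rho>"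

end

theory Submission
  imports Defs
begin

lemma mcomp_assoc: "map_comp (map_comp f g) h = map_comp f (map_comp g h)"
  by (rule ext) (auto simp: map_comp_def split: option.splits)

lemma morph_eqI: "mV f = mV g \<Longrightarrow> mE f = mE g \<Longrightarrow> f = (g::morph)"
  by (cases f, cases g) simp

lemma mcomp_V[simp]: "mV (g \<circ>\<^sub>m f) = mV g \<circ>\<^sub>m mV f" and mcomp_E[simp]: "mE (g \<circ>\<^sub>m f) = mE g \<circ>\<^sub>m mE f"
  by (simp_all add: mcomp_def)

lemma morph_comp:
  assumes "is_morph G1 G2 f" "is_morph G2 G3 g"
  shows "is_morph G1 G3 (g \<circ>\<^sub>m f)"
proof -
  have A: "\<And>e e'. mE (g \<circ>\<^sub>m f) e = Some e' \<Longrightarrow>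
        e' \<in> gE G3 \<and> set (gc G1 e) \<subseteq> dom (mV (g \<circ>\<^sub>m f)) \<and> gl G3 e' = gl G1 e \<and>
        map (\<lambda>v. the (mV (g \<circ>\<^sub>m f) v)) (gc G1 e) = gc G3 e'"
  proof -
    fix e e'' assume "mE (g \<circ>\<^sub>m f) e = Some e''"
    then obtain e' where f1: "mE f e = Some e'" and g1: "mE g e' = Some e''"
      by (auto simp: map_comp_Some_iff)
    from assms(1) f1 have F: "e' \<in> gE G2" "set (gc G1 e) \<subseteq> dom (mV f)" "gl G2 e' = gl G1 e"
       "map (\<lambda>v. the (mV f v)) (gc G1 e) = gc G2 e'" unfolding is_morph_def by blast+
    from assms(2) g1 have G: "e'' \<in> gE G3" "set (gc G2 e') \<subseteq> dom (mV g)" "gl G3 e'' = gl G2 e'"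
       "map (\<lambda>v. the (mV g v)) (gc G2 e') = gc G3 e''" unfolding is_morph_def by blast+
    have S: "set (gc G1 e) \<subseteq> dom (mV (g \<circ>\<^sub>m f))"
    proof
      fix v assume v: "v \<in> set (gc G1 e)"
      then obtain w where w: "mV f v = Some w" using F(2) by blast
      then have "w \<in> set (gc G2 e')" using v F(4)[symmetric] by force
      then show "v \<in> dom (mV (g \<circ>\<^sub>m f))" using G(2) w by (auto simp: map_comp_def)
    qed
    have "map (\<lambda>v. the (mV (g \<circ>\<^sub>m f) v)) (gc G1 e) = map (\<lambda>v. the (mV g v)) (map (\<lambda>v. the (mV f v)) (gc G1 e))"
      using F(2) by (auto simp: map_comp_def)
    then show "e'' \<in> gE G3 \<and> set (gc G1 e) \<subseteq> dom (mV (g \<circ>\<^sub>m f)) \<and> gl G3 e'' = gl G1 e \<and>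
        map (\<lambda>v. the (mV (g \<circ>\<^sub>m f) v)) (gc G1 e) = gc G3 e''"
      using F G S by simp
  qed
  show ?thesis using assms A unfolding is_morph_def
    by (auto simp: map_comp_Some_iff dom_def)
qed

lemma mid_morph: "is_graph ar G \<Longrightarrow> is_morph G G (mid G)"
  unfolding is_morph_def is_graph_def mid_def
  apply (auto simp: dom_def split: if_splits)
  apply (rule map_idI) apply auto
  done

lemma mid_comp: "is_morph G1 G2 f \<Longrightarrow> mid G2 \<circ>\<^sub>m f = f"
  unfolding is_morph_def mid_def
  by (intro morph_eqI) (auto simp: map_comp_def fun_eq_iff split: option.splits)


lemma set_map_ran: "set xs \<subseteq> dom f \<Longrightarrow> map (\<lambda>v. the (f v)) xs = ys \<Longrightarrow> set ys \<subseteq> ran f"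
proof
  fix y assume "set xs \<subseteq> dom f" "map (\<lambda>v. the (f v)) xs = ys" "y \<in> set ys"
  then obtain v where v: "v \<in> set xs" "y = the (f v)" by auto
  then obtain w where "f v = Some w" using \<open>set xs \<subseteq> dom f\<close> by blast
  then show "y \<in> ran f" using v by (auto intro: ranI)
qed

lemma pushout_jsurj:
  assumes PO: "is_pushout ar G0 G1 G2 phi psi G3 phi' psi'"
  shows "gV G3 \<subseteq> ran (mV phi') \<union> ran (mV psi')" "gE G3 \<subseteq> ran (mE phi') \<union> ran (mE psi')"
proof -
  define SV where "SV = gV G3 \<inter> (ran (mV phi') \<union> ran (mV psi'))"
  define SE where "SE = gE G3 \<inter> (ran (mE phi') \<union> ran (mE psi'))"
  define h2 where "h2 = \<lparr>mV = (\<lambda>v. if v \<in> SV then Some v else None),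
            mE = (\<lambda>e. if e \<in> SE then Some e else None)\<rparr>"
  have g3: "is_graph ar G3" and m1: "is_morph G1 G3 phi'" and m2: "is_morph G2 G3 psi'"
    and c: "phi' \<circ>\<^sub>m phi = psi' \<circ>\<^sub>m psi"
    and U: "\<And>H a b. is_graph ar H \<Longrightarrow> is_morph G1 H a \<Longrightarrow> is_morph G2 H b \<Longrightarrow> a \<circ>\<^sub>m phi = b \<circ>\<^sub>m psi \<Longrightarrow>
        (\<exists>!h. is_morph G3 H h \<and> h \<circ>\<^sub>m phi' = a \<and> h \<circ>\<^sub>m psi' = b)"
    using PO unfolding is_pushout_def by blast+
  have mid1: "is_morph G3 G3 (mid G3) \<and> mid G3 \<circ>\<^sub>m phi' = phi' \<and> mid G3 \<circ>\<^sub>m psi' = psi'"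
    using mid_morph[OF g3] mid_comp[OF m1] mid_comp[OF m2] by blast
  have h2m: "is_morph G3 G3 h2"
    unfolding is_morph_def
  proof (intro conjI allI impI)
    show "dom (mV h2) \<subseteq> gV G3" "dom (mE h2) \<subseteq> gE G3" unfolding h2_def SV_def SE_def
      by (auto split: if_splits)
    show "\<And>v y. mV h2 v = Some y \<Longrightarrow> y \<in> gV G3" unfolding h2_def SV_def
      by (auto split: if_splits)
    fix e e' assume e: "mE h2 e = Some e'"
    then have ee: "e' = e" "e \<in> SE" unfolding h2_def by (auto split: if_splits)
    show "e' \<in> gE G3" using ee SE_def by auto
    show "gl G3 e' = gl G3 e" using ee by simp
    have setV: "set (gc G3 e) \<subseteq> SV"
    proof -
      have "set (gc G3 e) \<subseteq> gV G3" using g3 ee SE_def unfolding is_graph_def by auto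
      moreover have "set (gc G3 e) \<subseteq> ran (mV phi') \<union> ran (mV psi')"
      proof -
        { assume "e \<in> ran (mE phi')"
          then obtain e0 where "mE phi' e0 = Some e" by (auto simp: ran_def)
          then have "set (gc G1 e0) \<subseteq> dom (mV phi')" "map (\<lambda>v. the (mV phi' v)) (gc G1 e0) = gc G3 e"
            using m1 unfolding is_morph_def by blast+
          then have "set (gc G3 e) \<subseteq> ran (mV phi')"
            by (rule set_map_ran) }
        moreover
        { assume "e \<in> ran (mE psi')"
          then obtain e0 where "mE psi' e0 = Some e" by (auto simp: ran_def)
          then have "set (gc G2 e0) \<subseteq> dom (mV psi')" "map (\<lambda>v. the (mV psi' v)) (gc G2 e0) = gc G3 e"
            using m2 unfolding is_morph_def by blast+
          then have "set (gc G3 e) \<subseteq> ran (mV psi')"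
            by (rule set_map_ran) }
        ultimately show ?thesis using ee SE_def by blast
      qed
      ultimately show ?thesis unfolding SV_def by blast
    qed
    then show "set (gc G3 e) \<subseteq> dom (mV h2)" unfolding h2_def by (auto simp: dom_def)
    show "map (\<lambda>v. the (mV h2 v)) (gc G3 e) = gc G3 e'"
      using setV ee unfolding h2_def by (auto intro!: map_idI)
  qed
  have "h2 \<circ>\<^sub>m phi' = phi'"
    using m1 unfolding h2_def SV_def SE_def is_morph_def
    by (intro morph_eqI) (auto simp: map_comp_def fun_eq_iff ran_def split: option.splits)
  moreover have "h2 \<circ>\<^sub>m psi' = psi'"
    using m2 unfolding h2_def SV_def SE_def is_morph_def
    by (intro morph_eqI) (auto simp: map_comp_def fun_eq_iff ran_def split: option.splits)
  ultimately have "h2 = mid G3" using U[OF g3 m1 m2 c] mid1 h2m by blast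
  then have "mV h2 = mV (mid G3)" "mE h2 = mE (mid G3)" by simp_all
  then show "gV G3 \<subseteq> ran (mV phi') \<union> ran (mV psi')" "gE G3 \<subseteq> ran (mE phi') \<union> ran (mE psi')"
    unfolding h2_def mid_def SV_def SE_def fun_eq_iff by (auto split: if_splits; metis)+
qed


definition minv :: "(nat \<rightharpoonup> nat) \<Rightarrow> (nat \<rightharpoonup> nat) \<Rightarrow> (nat \<rightharpoonup> nat)" where
  "minv k f y = (if \<exists>x. k x = Some y then f (THE x. k x = Some y) else None)"

definition binv :: "morph \<Rightarrow> morph \<Rightarrow> morph" where
  "binv k f = \<lparr>mV = minv (mV k) (mV f), mE = minv (mE k) (mE f)\<rparr>"

lemma minv_at: "inj_on k (dom k) \<Longrightarrow> k x = Some y \<Longrightarrow> minv k f y = f x"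
proof -
  assume i: "inj_on k (dom k)" and kx: "k x = Some y"
  have "(THE x. k x = Some y) = x"
  proof (rule the_equality)
    show "k x = Some y" by (rule kx)
    fix z assume "k z = Some y"
    then show "z = x" using i kx unfolding inj_on_def by (metis domI)
  qed
  then show ?thesis using kx unfolding minv_def by auto
qed

lemma minv_ran: "minv k f y \<noteq> None \<Longrightarrow> y \<in> ran k"
  unfolding minv_def by (auto simp: ran_def split: if_splits)

lemma minv_comp: "inj_on k (dom k) \<Longrightarrow> dom f \<subseteq> dom k \<Longrightarrow> map_comp (minv k f) k = f"
proof (rule ext)
  fix x assume i: "inj_on k (dom k)" and d: "dom f \<subseteq> dom k"
  show "map_comp (minv k f) k x = f x"
  proof (cases "k x")
    case None
    then have "x \<notin> dom f" using d by auto
    then show ?thesis using None by (simp add: domIff)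
  next
    case (Some y) then show ?thesis using minv_at[OF i Some] by (simp add: map_comp_def)
  qed
qed

lemma binv_morph:
  assumes k: "is_morph G0 G2 k" and f: "is_morph G0 G1 f" and i: "is_injective k"
    and dV: "dom (mV f) \<subseteq> dom (mV k)" and dE: "dom (mE f) \<subseteq> dom (mE k)"
  shows "is_morph G2 G1 (binv k f)"
  unfolding is_morph_def
proof (intro conjI allI impI)
  have iV: "inj_on (mV k) (dom (mV k))" and iE: "inj_on (mE k) (dom (mE k))"
    using i unfolding is_injective_def by auto
  show "dom (mV (binv k f)) \<subseteq> gV G2"
  proof
    fix y assume "y \<in> dom (mV (binv k f))"
    then have "y \<in> ran (mV k)" using minv_ran[of "mV k" "mV f" y] by (auto simp: binv_def)
    then show "y \<in> gV G2" using k unfolding is_morph_def ran_def by blast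
  qed
  show "dom (mE (binv k f)) \<subseteq> gE G2"
  proof
    fix y assume "y \<in> dom (mE (binv k f))"
    then have "y \<in> ran (mE k)" using minv_ran[of "mE k" "mE f" y] by (auto simp: binv_def)
    then show "y \<in> gE G2" using k unfolding is_morph_def ran_def by blast
  qed
  show "\<And>v y. mV (binv k f) v = Some y \<Longrightarrow> y \<in> gV G1"
  proof -
    fix v y assume "mV (binv k f) v = Some y"
    then have "minv (mV k) (mV f) v = Some y" by (simp add: binv_def)
    moreover from this obtain x where "mV k x = Some v"
      using minv_ran[of "mV k" "mV f" v] by (auto simp: ran_def)
    ultimately have "mV f x = Some y" using minv_at[OF iV] by simp
    then show "y \<in> gV G1" using f unfolding is_morph_def by blast
  qed
  fix e e' assume "mE (binv k f) e = Some e'"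
  then have me: "minv (mE k) (mE f) e = Some e'" by (simp add: binv_def)
  obtain e0 where ke: "mE k e0 = Some e"
      using me minv_ran[of "mE k" "mE f" e] by (auto simp: ran_def)
  have fe: "mE f e0 = Some e'" using me minv_at[OF iE ke] by simp
  have K: "e \<in> gE G2" "set (gc G0 e0) \<subseteq> dom (mV k)" "gl G2 e = gl G0 e0"
     "map (\<lambda>v. the (mV k v)) (gc G0 e0) = gc G2 e" using k ke unfolding is_morph_def by blast+
  have F: "e' \<in> gE G1" "set (gc G0 e0) \<subseteq> dom (mV f)" "gl G1 e' = gl G0 e0"
     "map (\<lambda>v. the (mV f v)) (gc G0 e0) = gc G1 e'" using f fe unfolding is_morph_def by blast+
  show "e' \<in> gE G1" by (rule F(1))
  show "gl G1 e' = gl G2 e" using K F by simp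
  have pt: "\<And>v. v \<in> set (gc G0 e0) \<Longrightarrow> minv (mV k) (mV f) (the (mV k v)) = mV f v"
  proof -
    fix v assume "v \<in> set (gc G0 e0)"
    then obtain w where w: "mV k v = Some w" using K(2) by blast
    show "minv (mV k) (mV f) (the (mV k v)) = mV f v" using minv_at[OF iV w] w by simp
  qed
  show "set (gc G2 e) \<subseteq> dom (mV (binv k f))"
    using pt F(2) K(4)[symmetric] by (auto simp: binv_def)
  have "map (\<lambda>v. the (mV (binv k f) v)) (gc G2 e) = map (\<lambda>v. the (mV (binv k f) (the (mV k v)))) (gc G0 e0)"
    using K(4)[symmetric] by simp
  also have "\<dots> = map (\<lambda>v. the (mV f v)) (gc G0 e0)"
    using pt by (auto simp: binv_def)
  finally show "map (\<lambda>v. the (mV (binv k f) v)) (gc G2 e) = gc G1 e'" using F(4) by simp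
qed


lemma back_core:
  fixes H P' P'' P0 Q0 B :: "nat \<rightharpoonup> nat"
  assumes "dom H \<subseteq> S" "S \<subseteq> ran P' \<union> ran P''"
    and h1: "map_comp H P' = (\<lambda>v. if v \<in> T then Some v else None)"
    and h2: "map_comp H P'' = B" and bb: "\<And>c. B c \<noteq> None \<Longrightarrow> c \<in> ran Q0"
    and cc: "map_comp P' P0 = map_comp P'' Q0" and hr: "\<forall>v y. H v = Some y \<longrightarrow> y \<in> T"
  shows "inj_on H (dom H) \<and> ran H = T"
proof -
  have key: "\<And>z. z \<in> dom H \<Longrightarrow> \<exists>y. P' y = Some z \<and> H z = Some y"
  proof -
    fix z assume z: "z \<in> dom H"
    have "\<exists>y. P' y = Some z"
    proof -
      have "z \<in> ran P' \<or> z \<in> ran P''" using z assms(1,2) by blast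
      then show ?thesis
      proof
        assume "z \<in> ran P'" then show ?thesis by (auto simp: ran_def)
      next
        assume "z \<in> ran P''"
        then obtain c where c: "P'' c = Some z" by (auto simp: ran_def)
        have "B c = H z" using fun_cong[OF h2, of c] c by simp
        then have "c \<in> ran Q0" using bb z by auto
        then obtain x where x: "Q0 x = Some c" by (auto simp: ran_def)
        have "map_comp P' P0 x = Some z" using fun_cong[OF cc, of x] x c by simp
        then show ?thesis by (auto simp: map_comp_Some_iff)
      qed
    qed
    then obtain y where y: "P' y = Some z" by blast
    have "H z = (if y \<in> T then Some y else None)" using fun_cong[OF h1, of y] y by simp
    then show "\<exists>y. P' y = Some z \<and> H z = Some y" using y z by (auto split: if_splits)
  qed
  have inj: "inj_on H (dom H)"
  proof (rule inj_onI)
    fix z1 z2 assume z1: "z1 \<in> dom H" and z2: "z2 \<in> dom H" and e: "H z1 = H z2"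
    obtain y1 where y1: "P' y1 = Some z1" "H z1 = Some y1" using key[OF z1] by blast
    obtain y2 where y2: "P' y2 = Some z2" "H z2 = Some y2" using key[OF z2] by blast
    show "z1 = z2" using y1 y2 e by simp
  qed
  have "ran H = T"
  proof
    show "ran H \<subseteq> T" using hr by (auto simp: ran_def)
    show "T \<subseteq> ran H"
    proof
      fix y assume "y \<in> T"
      then have "map_comp H P' y = Some y" using h1 by simp
      then show "y \<in> ran H" by (auto simp: map_comp_Some_iff ran_def)
    qed
  qed
  then show ?thesis using inj by simp
qed

lemma pushout_back_sub:
  fixes h b :: morph
  assumes PO: "is_pushout ar G0 G1 G2 phi psi G3 phi' psi'"
    and h: "is_morph G3 G1 h" and h1: "h \<circ>\<^sub>m phi' = mid G1" and h2: "h \<circ>\<^sub>m psi' = b"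
    and bV: "\<And>c. mV b c \<noteq> None \<Longrightarrow> c \<in> ran (mV psi)"
    and bE: "\<And>c. mE b c \<noteq> None \<Longrightarrow> c \<in> ran (mE psi)"
  shows "subgraph_morph G3 G1 h"
proof -
  have c: "phi' \<circ>\<^sub>m phi = psi' \<circ>\<^sub>m psi" using PO unfolding is_pushout_def by blast
  have cV: "map_comp (mV phi') (mV phi) = map_comp (mV psi') (mV psi)"
    using arg_cong[OF c, of mV] by simp
  have cE: "map_comp (mE phi') (mE phi) = map_comp (mE psi') (mE psi)"
    using arg_cong[OF c, of mE] by simp
  have h1V: "map_comp (mV h) (mV phi') = (\<lambda>v. if v \<in> gV G1 then Some v else None)"
    using arg_cong[OF h1, of mV] by (simp add: mid_def)
  have h1E: "map_comp (mE h) (mE phi') = (\<lambda>v. if v \<in> gE G1 then Some v else None)"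
    using arg_cong[OF h1, of mE] by (simp add: mid_def)
  have h2V: "map_comp (mV h) (mV psi') = mV b" using arg_cong[OF h2, of mV] by simp
  have h2E: "map_comp (mE h) (mE psi') = mE b" using arg_cong[OF h2, of mE] by simp
  have js: "gV G3 \<subseteq> ran (mV phi') \<union> ran (mV psi')" "gE G3 \<subseteq> ran (mE phi') \<union> ran (mE psi')"
    using pushout_jsurj[OF PO] by auto
  have hd: "dom (mV h) \<subseteq> gV G3" "dom (mE h) \<subseteq> gE G3" "\<forall>v y. mV h v = Some y \<longrightarrow> y \<in> gV G1"
    "\<forall>e y. mE h e = Some y \<longrightarrow> y \<in> gE G1" using h unfolding is_morph_def by blast+
  have A: "inj_on (mV h) (dom (mV h)) \<and> ran (mV h) = gV G1"
    by (rule back_core[OF hd(1) js(1) h1V h2V bV cV hd(3)])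
  have B: "inj_on (mE h) (dom (mE h)) \<and> ran (mE h) = gE G1"
    by (rule back_core[OF hd(2) js(2) h1E h2E bE cE hd(4)])
  show ?thesis using A B h unfolding subgraph_morph_def is_injective_def is_surjective_def by blast
qed


lemma eq_maps:
  fixes g m1 m2 e P' Pi' A B Q bl br :: "nat \<rightharpoonup> nat"
  assumes out: "\<And>z. z \<notin> S \<Longrightarrow> m1 z = None \<and> e z = None"
    and js: "S \<subseteq> ran P' \<union> ran Pi'"
    and a1: "map_comp m1 P' = (\<lambda>v. if v \<in> T then Some v else None)"
    and dg: "dom g \<subseteq> T"
    and a2: "map_comp e P' = map_comp A g"
    and a3: "map_comp m2 A = (\<lambda>v. if v \<in> TR then Some v else None)"
    and rg: "ran g \<subseteq> TR"
    and a4: "map_comp m1 Pi' = bl" and a5: "map_comp e Pi' = map_comp B Q"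
    and a6: "map_comp m2 B = br" and a7: "map_comp g bl = map_comp br Q"
  shows "map_comp g m1 = map_comp m2 e"
proof (rule ext)
  fix z
  show "map_comp g m1 z = map_comp m2 e z"
  proof (cases "z \<in> S")
    case False then show ?thesis using out by simp
  next
    case True
    then have "z \<in> ran P' \<or> z \<in> ran Pi'" using js by blast
    then show ?thesis
    proof
      assume "z \<in> ran P'"
      then obtain y where y: "P' y = Some z" by (auto simp: ran_def)
      have "map_comp g m1 z = map_comp g (map_comp m1 P') y" using y by (simp add: map_comp_def)
      also have "\<dots> = map_comp g (\<lambda>v. if v \<in> T then Some v else None) y" using a1 by simp
      also have "\<dots> = g y"
      proof (cases "y \<in> T")
        case False
        then have "y \<notin> dom g" using dg by blast
        then show ?thesis using False by (simp add: domIff)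
      qed simp
      also have "\<dots> = map_comp (map_comp m2 A) g y" using a3 rg
        by (cases "g y") (auto simp: ran_def)
      also have "\<dots> = map_comp m2 (map_comp A g) y" by (simp add: map_comp_def split: option.splits)
      also have "\<dots> = map_comp m2 (map_comp e P') y" using a2 by simp
      also have "\<dots> = map_comp m2 e z" using y by (simp add: map_comp_def)
      finally show ?thesis .
    next
      assume "z \<in> ran Pi'"
      then obtain y where y: "Pi' y = Some z" by (auto simp: ran_def)
      have "map_comp g m1 z = map_comp g (map_comp m1 Pi') y" using y by (simp add: map_comp_def)
      also have "\<dots> = map_comp br Q y" using a4 a7 by simp
      also have "\<dots> = map_comp m2 (map_comp B Q) y" using a6[symmetric]
        by (simp add: map_comp_def split: option.splits)
      also have "\<dots> = map_comp m2 (map_comp e Pi') y" using a5 by simp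
      also have "\<dots> = map_comp m2 e z" using y by (simp add: map_comp_def)
      finally show ?thesis .
    qed
  qed
qed

lemma gb_maps:
  fixes g p pi Q :: "nat \<rightharpoonup> nat"
  assumes ip: "inj_on p (dom p)"
    and uq: "\<And>x y. p x = Some y \<Longrightarrow> \<exists>w. Q y = Some w \<and> (\<forall>z. Q z = Some w \<longrightarrow> z = y)"
  shows "map_comp g (minv p pi) = map_comp (minv (map_comp Q p) (map_comp g pi)) Q"
    and "inj_on (map_comp Q p) (dom (map_comp Q p))"
proof -
  show iq: "inj_on (map_comp Q p) (dom (map_comp Q p))"
  proof (rule inj_onI)
    fix x1 x2 assume "x1 \<in> dom (map_comp Q p)" "x2 \<in> dom (map_comp Q p)"
      and e: "map_comp Q p x1 = map_comp Q p x2"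
    then obtain y1 y2 w where 1: "p x1 = Some y1" "Q y1 = Some w" and 2: "p x2 = Some y2" "Q y2 = Some w"
      by (auto simp: map_comp_Some_iff dom_def)
    have "y1 = y2" using uq[OF 1(1)] 1(2) 2(2) by auto
    then show "x1 = x2" using ip 1(1) 2(1) unfolding inj_on_def by (metis domI)
  qed
  show "map_comp g (minv p pi) = map_comp (minv (map_comp Q p) (map_comp g pi)) Q"
  proof (rule ext)
    fix c show "map_comp g (minv p pi) c = map_comp (minv (map_comp Q p) (map_comp g pi)) Q c"
    proof (cases "c \<in> ran p")
      case True
      then obtain x where x: "p x = Some c" by (auto simp: ran_def)
      obtain w where w: "Q c = Some w" using uq[OF x] by blast
      have qp: "map_comp Q p x = Some w" using x w by simp
      show ?thesis using minv_at[OF ip x] minv_at[OF iq qp] w by (simp add: map_comp_def)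
    next
      case False
      then have l: "minv p pi c = None" using minv_ran[of p pi c] by (cases "minv p pi c") auto
      show ?thesis
      proof (cases "Q c")
        case None then show ?thesis using l by simp
      next
        case (Some w)
        have "w \<notin> ran (map_comp Q p)"
        proof
          assume "w \<in> ran (map_comp Q p)"
          then obtain x y where xy: "p x = Some y" "Q y = Some w" by (auto simp: ran_def map_comp_Some_iff)
          obtain w' where "Q y = Some w'" "\<forall>z. Q z = Some w' \<longrightarrow> z = y" using uq[OF xy(1)] by blast
          then have "c = y" using xy(2) Some by simp
          then show False using False \<open>p x = Some y\<close> by (auto simp: ran_def)
        qed
        then have "minv (map_comp Q p) (map_comp g pi) w = None" using minv_ran by blast
        then show ?thesis using l Some by simp
      qed
    qed
  qed
qed


lemma inst_props:
  assumes "x \<in> instantiations ar \<rho>" "\<rho> = (L, R, r, U)" "is_urule ar \<rho>"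
  shows "case x of (Lb, pi, Rb, gamma) \<Rightarrow> is_graph ar Lb \<and> is_graph ar Rb \<and> is_morph L Lb pi \<and> is_morph Lb Rb gamma"
  using assms(1)
proof induction
  case (base L' R' r' U')
  then have "L' = L" "R' = R" "r' = r" using assms(2) by auto
  then show ?case using assms(2,3) base mid_morph[of ar L] unfolding is_urule_def by auto
next
  case (step L' R' r' U' i u res)
  then have LL: "L' = L" using assms(2) by auto
  obtain Lb pi Rb gamma where i: "i = (Lb, pi, Rb, gamma)" by (cases i) auto
  obtain Lu p Ru q where u: "u = (Lu, p, Ru, q)" by (cases u) auto
  obtain Lbu pinew Rbu eta where res: "res = (Lbu, pinew, Rbu, eta)" by (cases res) auto
  have IH: "is_graph ar Lb \<and> is_graph ar Rb \<and> is_morph L Lb pi \<and> is_morph Lb Rb gamma"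
    using step.IH i by simp
  obtain p' pi' alpha beta where
    P1: "is_pushout ar L Lb Lu pi p Lbu p' pi'" and
    P2: "is_pushout ar L Rb Ru (gamma \<circ>\<^sub>m pi) (q \<circ>\<^sub>m p) Rbu alpha beta" and
    em: "is_morph Lbu Rbu eta" and pn: "pinew = p' \<circ>\<^sub>m pi"
    using step.hyps(4) unfolding i u res LL oplus_step_def by auto
  have "is_graph ar Lbu" "is_morph Lb Lbu p'" using P1 unfolding is_pushout_def by auto
  moreover have "is_graph ar Rbu" using P2 unfolding is_pushout_def by auto
  ultimately show ?case using res em pn morph_comp[of L Lb pi Lbu p'] IH by simp
qed


theorem mainTheorem2:
  fixes ar :: "'l::finite \<Rightarrow> nat"
    and L R :: "'l hgraph" and r :: morph
    and U :: "('l hgraph \<times> morph \<times> 'l hgraph \<times> morph) set"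
  assumes "is_urule ar (L, R, r, U)"
    and "(Lb, pi, Rb, gamma) \<in> instantiations ar (L, R, r, U)"
    and "u \<in> U"
    and "oplus_step ar L (Lb, pi, Rb, gamma) u (Lbu, pinew, Rbu, eta)"
  shows "\<exists>mu' mu''. subgraph_morph Lbu Lb mu' \<and> subgraph_morph Rbu Rb mu'' \<and>
           gamma \<circ>\<^sub>m mu' = mu'' \<circ>\<^sub>m eta"
proof -
  obtain Lu p Ru q where u: "u = (Lu, p, Ru, q)" by (cases u) auto
  have UR: "is_graph ar L" "is_graph ar R" "is_morph L R r" "finite U"
    "\<forall>(Lu, p, Ru, q) \<in> U.
        is_graph ar Lu \<and> is_graph ar Ru \<and>
        is_morph L Lu p \<and> is_total L p \<and> is_injective p \<and> is_morph Lu Ru q \<and>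
        (\<forall>x\<in>gV L. \<forall>x'. mV p x = Some x' \<longrightarrow>
            (\<exists>y. mV q x' = Some y \<and> (\<forall>z. mV q z = Some y \<longrightarrow> z = x'))) \<and>
        (\<forall>x\<in>gE L. \<forall>x'. mE p x = Some x' \<longrightarrow>
            (\<exists>y. mE q x' = Some y \<and> (\<forall>z. mE q z = Some y \<longrightarrow> z = x'))) \<and>
        Qset L Lu p \<noteq> {}"
    using assms(1) unfolding is_urule_def by auto
  have Uu: "is_graph ar Lu \<and> is_graph ar Ru \<and>
        is_morph L Lu p \<and> is_total L p \<and> is_injective p \<and> is_morph Lu Ru q \<and>
        (\<forall>x\<in>gV L. \<forall>x'. mV p x = Some x' \<longrightarrow>
            (\<exists>y. mV q x' = Some y \<and> (\<forall>z. mV q z = Some y \<longrightarrow> z = x'))) \<and>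
        (\<forall>x\<in>gE L. \<forall>x'. mE p x = Some x' \<longrightarrow>
            (\<exists>y. mE q x' = Some y \<and> (\<forall>z. mE q z = Some y \<longrightarrow> z = x')))"
    using bspec[OF UR(5) assms(3)] unfolding u by simp
  have gLu: "is_graph ar Lu" and gRu: "is_graph ar Ru" and mp: "is_morph L Lu p"
    and tp: "is_total L p" and ip: "is_injective p" and mq: "is_morph Lu Ru q"
    using Uu by blast+
  have ipV: "inj_on (mV p) (dom (mV p))" and ipE: "inj_on (mE p) (dom (mE p))"
    using ip unfolding is_injective_def by auto
  have dpV: "dom (mV p) = gV L" and dpE: "dom (mE p) = gE L" using tp unfolding is_total_def by auto
  have uqV: "\<And>x y. mV p x = Some y \<Longrightarrow> \<exists>w. mV q y = Some w \<and> (\<forall>z. mV q z = Some w \<longrightarrow> z = y)"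
  proof -
    fix x y assume h: "mV p x = Some y"
    then have "x \<in> gV L" using dpV by auto
    then show "\<exists>w. mV q y = Some w \<and> (\<forall>z. mV q z = Some w \<longrightarrow> z = y)" using Uu h by blast
  qed
  have uqE: "\<And>x y. mE p x = Some y \<Longrightarrow> \<exists>w. mE q y = Some w \<and> (\<forall>z. mE q z = Some w \<longrightarrow> z = y)"
  proof -
    fix x y assume h: "mE p x = Some y"
    then have "x \<in> gE L" using dpE by auto
    then show "\<exists>w. mE q y = Some w \<and> (\<forall>z. mE q z = Some w \<longrightarrow> z = y)" using Uu h by blast
  qed
  have IP: "is_graph ar Lb \<and> is_graph ar Rb \<and> is_morph L Lb pi \<and> is_morph Lb Rb gamma"
    using inst_props[OF assms(2) refl assms(1)] by simp
  then have gLb: "is_graph ar Lb" and gRb: "is_graph ar Rb" and mpi: "is_morph L Lb pi"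
    and mg: "is_morph Lb Rb gamma" by blast+
  obtain p' pi' alpha beta where
    P1: "is_pushout ar L Lb Lu pi p Lbu p' pi'" and
    P2: "is_pushout ar L Rb Ru (gamma \<circ>\<^sub>m pi) (q \<circ>\<^sub>m p) Rbu alpha beta" and
    em: "is_morph Lbu Rbu eta" and e1: "eta \<circ>\<^sub>m p' = alpha \<circ>\<^sub>m gamma" and
    e2: "eta \<circ>\<^sub>m pi' = beta \<circ>\<^sub>m q"
    using assms(4) unfolding u oplus_step_def by auto
  define bL where "bL = binv p pi"
  have dpiV: "dom (mV pi) \<subseteq> dom (mV p)" and dpiE: "dom (mE pi) \<subseteq> dom (mE p)"
    using mpi dpV dpE unfolding is_morph_def by auto
  have mbL: "is_morph Lu Lb bL" unfolding bL_def by (rule binv_morph[OF mp mpi ip dpiV dpiE])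
  have bLp: "bL \<circ>\<^sub>m p = pi" unfolding bL_def
    by (rule morph_eqI) (simp_all add: binv_def minv_comp[OF ipV dpiV] minv_comp[OF ipE dpiE])
  have "\<exists>!h. is_morph Lbu Lb h \<and> h \<circ>\<^sub>m p' = mid Lb \<and> h \<circ>\<^sub>m pi' = bL"
    using P1 gLb mid_morph[OF gLb] mbL mid_comp[OF mpi] bLp unfolding is_pushout_def by metis
  then obtain h1 where h1: "is_morph Lbu Lb h1" "h1 \<circ>\<^sub>m p' = mid Lb" "h1 \<circ>\<^sub>m pi' = bL" by blast
  have sub1: "subgraph_morph Lbu Lb h1"
    by (rule pushout_back_sub[OF P1 h1]) (simp_all add: bL_def binv_def minv_ran)
  define k where "k = q \<circ>\<^sub>m p"
  define f where "f = gamma \<circ>\<^sub>m pi"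
  define bR where "bR = binv k f"
  have mk: "is_morph L Ru k" unfolding k_def by (rule morph_comp[OF mp mq])
  have mf: "is_morph L Rb f" unfolding f_def by (rule morph_comp[OF mpi mg])
  have ikV: "inj_on (mV k) (dom (mV k))" using gb_maps(2)[OF ipV uqV] by (simp add: k_def)
  have ikE: "inj_on (mE k) (dom (mE k))" using gb_maps(2)[OF ipE uqE] by (simp add: k_def)
  have ik: "is_injective k" using ikV ikE unfolding is_injective_def by simp
  have dfV: "dom (mV f) \<subseteq> dom (mV k)"
  proof
    fix x assume "x \<in> dom (mV f)"
    then have "x \<in> gV L" using mf unfolding is_morph_def by blast
    then obtain y where y: "mV p x = Some y" using dpV by blast
    then obtain w where "mV q y = Some w" using uqV by blast
    then show "x \<in> dom (mV k)" using y by (simp add: k_def dom_def)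
  qed
  have dfE: "dom (mE f) \<subseteq> dom (mE k)"
  proof
    fix x assume "x \<in> dom (mE f)"
    then have "x \<in> gE L" using mf unfolding is_morph_def by blast
    then obtain y where y: "mE p x = Some y" using dpE by blast
    then obtain w where "mE q y = Some w" using uqE by blast
    then show "x \<in> dom (mE k)" using y by (simp add: k_def dom_def)
  qed
  have mbR: "is_morph Ru Rb bR" unfolding bR_def by (rule binv_morph[OF mk mf ik dfV dfE])
  have bRk: "bR \<circ>\<^sub>m k = f" unfolding bR_def
    by (rule morph_eqI) (simp_all add: binv_def minv_comp[OF ikV dfV] minv_comp[OF ikE dfE])
  have "\<exists>!h. is_morph Rbu Rb h \<and> h \<circ>\<^sub>m alpha = mid Rb \<and> h \<circ>\<^sub>m beta = bR"
    using P2 gRb mid_morph[OF gRb] mbR mid_comp[OF mf] bRk unfolding is_pushout_def k_def f_def by metis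
  then obtain h2 where h2: "is_morph Rbu Rb h2" "h2 \<circ>\<^sub>m alpha = mid Rb" "h2 \<circ>\<^sub>m beta = bR" by blast
  have P2': "is_pushout ar L Rb Ru f k Rbu alpha beta" using P2 by (simp add: k_def f_def)
  have sub2: "subgraph_morph Rbu Rb h2"
    by (rule pushout_back_sub[OF P2' h2]) (simp_all add: bR_def binv_def minv_ran)
  have eq: "gamma \<circ>\<^sub>m h1 = h2 \<circ>\<^sub>m eta"
  proof (rule morph_eqI)
    show "mV (gamma \<circ>\<^sub>m h1) = mV (h2 \<circ>\<^sub>m eta)"
    proof -
      have "map_comp (mV gamma) (mV h1) = map_comp (mV h2) (mV eta)"
      proof (rule eq_maps[where S="gV Lbu" and T="gV Lb" and TR="gV Rb" and P'="mV p'"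
            and Pi'="mV pi'" and A="mV alpha" and B="mV beta" and Q="mV q" and bl="mV bL" and br="mV bR"])
        show "\<And>z. z \<notin> gV Lbu \<Longrightarrow> mV h1 z = None \<and> mV eta z = None"
          using h1(1) em unfolding is_morph_def by blast
        show "gV Lbu \<subseteq> ran (mV p') \<union> ran (mV pi')" using pushout_jsurj[OF P1] by blast
        show "map_comp (mV h1) (mV p') = (\<lambda>v. if v \<in> gV Lb then Some v else None)"
          using arg_cong[OF h1(2), of mV] by (simp add: mid_def)
        show "dom (mV gamma) \<subseteq> gV Lb" using mg unfolding is_morph_def by blast
        show "map_comp (mV eta) (mV p') = map_comp (mV alpha) (mV gamma)"
          using arg_cong[OF e1, of mV] by simp
        show "map_comp (mV h2) (mV alpha) = (\<lambda>v. if v \<in> gV Rb then Some v else None)"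
          using arg_cong[OF h2(2), of mV] by (simp add: mid_def)
        show "ran (mV gamma) \<subseteq> gV Rb" using mg unfolding is_morph_def ran_def by blast
        show "map_comp (mV h1) (mV pi') = mV bL" using arg_cong[OF h1(3), of mV] by simp
        show "map_comp (mV eta) (mV pi') = map_comp (mV beta) (mV q)"
          using arg_cong[OF e2, of mV] by simp
        show "map_comp (mV h2) (mV beta) = mV bR" using arg_cong[OF h2(3), of mV] by simp
        show "map_comp (mV gamma) (mV bL) = map_comp (mV bR) (mV q)"
          using gb_maps(1)[OF ipV uqV, where g="mV gamma" and pi="mV pi"]
          by (simp add: bL_def bR_def binv_def k_def f_def)
      qed
      then show ?thesis by simp
    qed
    show "mE (gamma \<circ>\<^sub>m h1) = mE (h2 \<circ>\<^sub>m eta)"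
    proof -
      have "map_comp (mE gamma) (mE h1) = map_comp (mE h2) (mE eta)"
      proof (rule eq_maps[where S="gE Lbu" and T="gE Lb" and TR="gE Rb" and P'="mE p'"
            and Pi'="mE pi'" and A="mE alpha" and B="mE beta" and Q="mE q" and bl="mE bL" and br="mE bR"])
        show "\<And>z. z \<notin> gE Lbu \<Longrightarrow> mE h1 z = None \<and> mE eta z = None"
          using h1(1) em unfolding is_morph_def by blast
        show "gE Lbu \<subseteq> ran (mE p') \<union> ran (mE pi')" using pushout_jsurj[OF P1] by blast
        show "map_comp (mE h1) (mE p') = (\<lambda>v. if v \<in> gE Lb then Some v else None)"
          using arg_cong[OF h1(2), of mE] by (simp add: mid_def)
        show "dom (mE gamma) \<subseteq> gE Lb" using mg unfolding is_morph_def by blast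
        show "map_comp (mE eta) (mE p') = map_comp (mE alpha) (mE gamma)"
          using arg_cong[OF e1, of mE] by simp
        show "map_comp (mE h2) (mE alpha) = (\<lambda>v. if v \<in> gE Rb then Some v else None)"
          using arg_cong[OF h2(2), of mE] by (simp add: mid_def)
        show "ran (mE gamma) \<subseteq> gE Rb" using mg unfolding is_morph_def ran_def by blast
        show "map_comp (mE h1) (mE pi') = mE bL" using arg_cong[OF h1(3), of mE] by simp
        show "map_comp (mE eta) (mE pi') = map_comp (mE beta) (mE q)"
          using arg_cong[OF e2, of mE] by simp
        show "map_comp (mE h2) (mE beta) = mE bR" using arg_cong[OF h2(3), of mE] by simp
        show "map_comp (mE gamma) (mE bL) = map_comp (mE bR) (mE q)"
          using gb_maps(1)[OF ipE uqE, where g="mE gamma" and pi="mE pi"]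
          by (simp add: bL_def bR_def binv_def k_def f_def)
      qed
      then show ?thesis by simp
    qed
  qed
  show ?thesis using sub1 sub2 eq by blast
qed

end
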